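(* Let $(X,\rho)$ be a metric space, $(M,d)$ a metric space, $Q\ge1$ an integer, $\Omega\subseteq X$ open nonempty and $f\colon\Omega\to\mathcal A_Q(M)$ a function continuous at a point $x\in\Omega\setminus\Lambda$, where $\Lambda=\{z\in\Omega:\ f(z)=Q[\![P]\!]\text{ for some }P\in M\}$. Then there exist positive integers $R,S$ with $Q=R+S$, an open neighborhood $U$ of $x$ and functions $g\colon U\to\mathcal A_R(M)$, $h\colon U\to\mathcal A_S(M)$ such that $f|_U=g+h$ and $\operatorname{Lip} g(x)\le\operatorname{Lip} f(x)$, $\operatorname{Lip} h(x)\le\operatorname{Lip} f(x)$.
   Context: For a metric space $(M,d)$ and positive integer $N$, $\mathcal A_N(M)$ is the set of measures $\sum_{i=1}^N[\![P_i]\!]$ (sums of $N$ Dirac masses at not necessarily distinct points of $M$) with metric $\mathcal G\big(\sum_i[\![A_i]\!],\sum_i[\![B_i]\!]\big)=\min_\sigma\sqrt{\sum_{i=1}^N d(A_i,B_{\sigma(i)})^2}$ over permutations $\sigma$ of $\{1,\dots,N\}$; $g+h$ is the pointwise sum of measures. For a function $u$ from a subset $A$ of $X$ into a metric space with metric $D$, $\operatorname{Lip} u(x)=\limsup_{y\in A,\,y\to x}D(u(y),u(x))/\rho(y,x)$. *)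

theory Defs
  imports "HOL-Analysis.Analysis" "HOL-Library.Multiset"
begin

text \<open>Elements of A_N(M): multisets of points of M of size N (sums of N Dirac masses).\<close>
definition AQ :: "nat \<Rightarrow> 'm multiset set" where
  "AQ N = {T. size T = N}"

definition Gdist :: "'m::metric_space multiset \<Rightarrow> 'm multiset \<Rightarrow> real" where
  "Gdist A B = Inf {sqrt (\<Sum>i<length xs. (dist (xs ! i) (ys ! i))\<^sup>2) | xs ys.
                     mset xs = A \<and> mset ys = B}"

definition Lip :: "('a::metric_space \<Rightarrow> 'b) \<Rightarrow> ('b \<Rightarrow> 'b \<Rightarrow> real) \<Rightarrow> 'a set \<Rightarrow> 'a \<Rightarrow> ereal" where
  "Lip u D A x = Limsup (at x within A) (\<lambda>y. ereal (D (u y) (u x) / dist y x))"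

end

theory Submission
  imports Defs
begin

lemma Limsup_filter_mono: "F \<le> G \<Longrightarrow> Limsup F f \<le> Limsup G f"
  unfolding Limsup_def by (rule INF_superset_mono) (auto dest: filter_leD)

definition gval :: "'m::metric_space list \<Rightarrow> 'm list \<Rightarrow> real" where
  "gval xs ys = sqrt (\<Sum>i<length xs. (dist (xs ! i) (ys ! i))\<^sup>2)"

lemma gval_zip: "length xs = length ys \<Longrightarrow>
  gval xs ys = sqrt (sum_list (map (\<lambda>(p,q). (dist p q)\<^sup>2) (zip xs ys)))"
  unfolding gval_def by (simp add: sum_list_sum_nth atLeast0LessThan)

lemma sum_list_filter_le:
  fixes f :: "'a \<Rightarrow> real"
  assumes "\<And>z. f z \<ge> 0"
  shows "sum_list (map f (filter P zs)) \<le> sum_list (map f zs)"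
  using assms by (induction zs) (auto simp: add_increasing)

lemma Gdist_alt: "Gdist A B = Inf {gval xs ys | xs ys. mset xs = A \<and> mset ys = B}"
  unfolding Gdist_def gval_def by simp

lemma key_lists:
  assumes "mset xs = A" "mset ys = B" "size A = size B" "gval xs ys < e"
    and cond: "\<forall>q\<in>#B. \<forall>p. dist p q < e \<longrightarrow> (Pr p \<longleftrightarrow> Pr q)"
  shows "\<exists>xs' ys'. mset xs' = filter_mset Pr A \<and> mset ys' = filter_mset Pr B \<and>
            length xs' = length ys' \<and> gval xs' ys' \<le> gval xs ys"
proof -
  have len: "length xs = length ys" using assms(1-3) by (metis size_mset)
  define zs where "zs = zip xs ys"
  define F where "F = (\<lambda>(p::'a,q::'a). (dist p q)\<^sup>2)"
  have F0: "\<And>z. F z \<ge> 0" unfolding F_def by auto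
  have gv: "gval xs ys = sqrt (sum_list (map F zs))"
    using gval_zip[OF len] unfolding zs_def F_def by simp
  have close: "dist p q < e" if "(p,q) \<in> set zs" for p q
  proof -
    have "F (p,q) \<le> sum_list (map F zs)"
      using that F0 by (intro member_le_sum_list) auto
    hence "dist p q \<le> gval xs ys" unfolding gv F_def by (simp add: real_le_rsqrt)
    thus ?thesis using assms(4) by simp
  qed
  have eqf: "filter (\<lambda>(p,q). Pr p) zs = filter (\<lambda>(p,q). Pr q) zs"
  proof (rule filter_cong[OF refl])
    fix z assume z: "z \<in> set zs"
    obtain p q where pq: "z = (p,q)" by (cases z)
    have "q \<in> set ys" using z pq unfolding zs_def by (meson set_zip_rightD)
    hence "q \<in># B" using assms(2) by auto
    thus "(case z of (p,q) \<Rightarrow> Pr p) = (case z of (p,q) \<Rightarrow> Pr q)"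
      using cond close z pq by auto
  qed
  define zs' where "zs' = filter (\<lambda>(p,q). Pr p) zs"
  define xs' where "xs' = map fst zs'"
  define ys' where "ys' = map snd zs'"
  have "mset xs' = filter_mset Pr A"
  proof -
    have "xs' = filter Pr (map fst zs)"
      unfolding xs'_def zs'_def by (simp add: filter_map o_def split_def)
    also have "map fst zs = xs" unfolding zs_def using len by simp
    finally show ?thesis using assms(1) by simp
  qed
  moreover have "mset ys' = filter_mset Pr B"
  proof -
    have "ys' = filter Pr (map snd zs)"
      unfolding ys'_def zs'_def eqf by (simp add: filter_map o_def split_def)
    also have "map snd zs = ys" unfolding zs_def using len by simp
    finally show ?thesis using assms(2) by simp
  qed
  moreover have "length xs' = length ys'" unfolding xs'_def ys'_def by simp
  moreover have "gval xs' ys' \<le> gval xs ys"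
  proof -
    have "zip xs' ys' = zs'" unfolding xs'_def ys'_def by (simp add: zip_map_fst_snd)
    hence "gval xs' ys' = sqrt (sum_list (map F zs'))"
      using gval_zip[of xs' ys'] unfolding xs'_def ys'_def F_def by simp
    also have "\<dots> \<le> sqrt (sum_list (map F zs))"
      unfolding zs'_def using sum_list_filter_le[OF F0] by (simp add: real_sqrt_le_iff)
    finally show ?thesis using gv by simp
  qed
  ultimately show ?thesis by blast
qed

lemma key:
  fixes A B :: "'m::metric_space multiset"
  assumes "Gdist A B < e" "size A = size B"
    and cond: "\<forall>q\<in>#B. \<forall>p. dist p q < e \<longrightarrow> (Pr p \<longleftrightarrow> Pr q)"
  shows "Gdist (filter_mset Pr A) (filter_mset Pr B) \<le> Gdist A B \<and>
         size (filter_mset Pr A) = size (filter_mset Pr B)"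
proof -
  define S where "S = {gval xs ys | xs ys. mset xs = A \<and> mset ys = B}"
  define T where "T = {gval xs ys | xs ys. mset xs = filter_mset Pr A \<and> mset ys = filter_mset Pr B}"
  have GA: "Gdist A B = Inf S" unfolding S_def Gdist_alt ..
  have GT: "Gdist (filter_mset Pr A) (filter_mset Pr B) = Inf T" unfolding T_def Gdist_alt ..
  have Sne: "S \<noteq> {}" unfolding S_def by (metis (mono_tags, lifting) empty_iff ex_mset mem_Collect_eq)
  have bT: "bdd_below T" unfolding T_def gval_def by (rule bdd_belowI[of _ 0]) (auto intro!: sum_nonneg)
  have main: "\<exists>t\<in>T. t \<le> c \<and> (\<exists>xs' ys'. mset xs' = filter_mset Pr A \<and> mset ys' = filter_mset Pr B \<and>
            length xs' = length ys')" if cS: "c \<in> S" and ce: "c < e" for c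
  proof -
    obtain xs ys where cg: "c = gval xs ys" and "mset xs = A" "mset ys = B" using cS unfolding S_def by auto
    then obtain xs' ys' where "mset xs' = filter_mset Pr A \<and> mset ys' = filter_mset Pr B \<and>
            length xs' = length ys' \<and> gval xs' ys' \<le> gval xs ys"
      using key_lists[of xs A ys B e Pr] assms ce by auto
    thus ?thesis unfolding T_def cg by blast
  qed
  have sz: "size (filter_mset Pr A) = size (filter_mset Pr B)"
  proof -
    obtain c where "c \<in> S" "c < e" using cInf_lessD[OF Sne] assms(1) GA by auto
    then obtain xs' ys' where "mset xs' = filter_mset Pr A" "mset ys' = filter_mset Pr B"
            "length xs' = length ys'" using main by blast
    thus ?thesis by (metis size_mset)
  qed
  have "Inf T \<le> Inf S"
  proof (rule ccontr)
    assume "\<not> Inf T \<le> Inf S"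
    hence "Inf S < min e (Inf T)" using assms(1) GA by auto
    then obtain c where "c \<in> S" "c < min e (Inf T)" using cInf_lessD[OF Sne] by blast
    then obtain t where "t \<in> T" "t \<le> c" using main by force
    hence "Inf T \<le> t" using bT by (simp add: cInf_lower)
    thus False using \<open>t \<le> c\<close> \<open>c < min e (Inf T)\<close> by auto
  qed
  thus ?thesis using GA GT sz by simp
qed

lemma rep_mset: "set_mset M \<subseteq> {a} \<Longrightarrow> M = replicate_mset (size M) a"
  by (induction M) auto

theorem corollary3p2:
  fixes \<Omega> :: "'x::metric_space set"
    and f :: "'x \<Rightarrow> 'm::metric_space multiset"
    and Q :: nat and x :: 'x
  assumes "Q \<ge> 1"
    and "open \<Omega>" and "\<Omega> \<noteq> {}"
    and "\<forall>z\<in>\<Omega>. f z \<in> AQ Q"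
    and "x \<in> \<Omega>"
    and "\<forall>e>0. \<exists>\<delta>>0. \<forall>z\<in>\<Omega>. dist z x < \<delta> \<longrightarrow> Gdist (f z) (f x) < e"
    and "x \<notin> {z \<in> \<Omega>. \<exists>P. f z = replicate_mset Q P}"
  shows "\<exists>R S U g h. R > 0 \<and> S > 0 \<and> Q = R + S \<and> open U \<and> x \<in> U \<and> U \<subseteq> \<Omega> \<and>
           (\<forall>z\<in>U. g z \<in> AQ R \<and> h z \<in> AQ S \<and> f z = g z + h z) \<and>
           Lip g Gdist U x \<le> Lip f Gdist \<Omega> x \<and>
           Lip h Gdist U x \<le> Lip f Gdist \<Omega> x"
proof -
  have szx: "size (f x) = Q" using assms(4,5) unfolding AQ_def by auto
  have szz: "size (f z) = Q" if "z \<in> \<Omega>" for z using assms(4) that unfolding AQ_def by auto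
  have "f x \<noteq> {#}" using szx assms(1) by auto
  then obtain P0 where P0: "P0 \<in># f x" by (metis multiset_nonemptyE)
  define Oth where "Oth = set_mset (f x) - {P0}"
  have Othne: "Oth \<noteq> {}"
  proof
    assume "Oth = {}"
    hence "set_mset (f x) \<subseteq> {P0}" unfolding Oth_def by auto
    hence "f x = replicate_mset Q P0" using rep_mset szx by metis
    thus False using assms(5,7) by auto
  qed
  have Othfin: "finite Oth" unfolding Oth_def by auto
  define d0 where "d0 = Min ((\<lambda>q. dist P0 q) ` Oth)"
  have d0le: "d0 \<le> dist P0 q" if "q \<in> Oth" for q
    unfolding d0_def using Othfin that by (intro Min_le) auto
  have d0pos: "d0 > 0"
    unfolding d0_def using Othfin Othne by (subst Min_gr_iff) (auto simp: Oth_def)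
  define e where "e = d0 / 2"
  have epos: "e > 0" unfolding e_def using d0pos by simp
  define Pr where "Pr = (\<lambda>p. dist p P0 < e)"
  have cond: "\<forall>q\<in>#f x. \<forall>p. dist p q < e \<longrightarrow> (Pr p \<longleftrightarrow> Pr q)"
  proof (intro ballI allI impI)
    fix q p assume q: "q \<in># f x" and pq: "dist p q < e"
    show "Pr p \<longleftrightarrow> Pr q"
    proof (cases "q = P0")
      case True thus ?thesis using pq epos unfolding Pr_def by simp
    next
      case False
      hence "q \<in> Oth" using q unfolding Oth_def by auto
      hence dq: "d0 \<le> dist P0 q" by (rule d0le)
      have "dist P0 q \<le> dist P0 p + dist p q" by (rule dist_triangle)
      thus ?thesis using dq pq d0pos unfolding Pr_def e_def by (simp add: dist_commute)
    qed
  qed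
  have condn: "\<forall>q\<in>#f x. \<forall>p. dist p q < e \<longrightarrow> ((\<lambda>p. \<not> Pr p) p \<longleftrightarrow> (\<lambda>p. \<not> Pr p) q)"
    using cond by auto
  obtain \<delta> where dpos: "\<delta> > 0" and dl: "\<forall>z\<in>\<Omega>. dist z x < \<delta> \<longrightarrow> Gdist (f z) (f x) < e"
    using assms(6) epos by blast
  define U where "U = \<Omega> \<inter> ball x \<delta>"
  define g where "g = (\<lambda>z. filter_mset Pr (f z))"
  define h where "h = (\<lambda>z. filter_mset (\<lambda>p. \<not> Pr p) (f z))"
  define R where "R = size (g x)"
  define S where "S = size (h x)"
  have keyg: "Gdist (g z) (g x) \<le> Gdist (f z) (f x) \<and> size (g z) = size (g x)"
     and keyh: "Gdist (h z) (h x) \<le> Gdist (f z) (f x) \<and> size (h z) = size (h x)"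
    if "z \<in> U" for z
  proof -
    have zO: "z \<in> \<Omega>" and "dist z x < \<delta>" using that unfolding U_def by (auto simp: dist_commute)
    hence lt: "Gdist (f z) (f x) < e" using dl by auto
    have "size (f z) = size (f x)" using szz[OF zO] szx by simp
    thus "Gdist (g z) (g x) \<le> Gdist (f z) (f x) \<and> size (g z) = size (g x)"
      "Gdist (h z) (h x) \<le> Gdist (f z) (f x) \<and> size (h z) = size (h x)"
      unfolding g_def h_def using key[OF lt _ cond] key[OF lt _ condn] by auto
  qed
  have "P0 \<in># g x" unfolding g_def Pr_def using P0 epos by simp
  hence Rpos: "R > 0" unfolding R_def by (metis gr0I size_eq_0_iff_empty empty_iff set_mset_empty)
  obtain q where q: "q \<in> Oth" using Othne by auto
  have "\<not> Pr q" unfolding Pr_def e_def using d0le[OF q] d0pos by (simp add: dist_commute)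
  hence "q \<in># h x" unfolding h_def using q unfolding Oth_def by simp
  hence Spos: "S > 0" unfolding S_def by (metis gr0I size_eq_0_iff_empty empty_iff set_mset_empty)
  have fsplit: "f z = g z + h z" for z unfolding g_def h_def by (rule multiset_partition)
  have QRS: "Q = R + S" unfolding R_def S_def using szx fsplit[of x] by (metis size_union)
  have UO: "U \<subseteq> \<Omega>" unfolding U_def by auto
  have oU: "open U" unfolding U_def using assms(2) by auto
  have xU: "x \<in> U" unfolding U_def using assms(5) dpos by auto
  have parts: "\<forall>z\<in>U. g z \<in> AQ R \<and> h z \<in> AQ S \<and> f z = g z + h z"
    unfolding AQ_def R_def S_def using keyg keyh fsplit by auto
  have evU: "eventually (\<lambda>y. y \<in> U) (at x within U)"
    by (simp add: eventually_at_filter)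
  have Lg: "Lip g Gdist U x \<le> Lip f Gdist \<Omega> x"
  proof -
    have "Lip g Gdist U x \<le> Limsup (at x within U) (\<lambda>y. ereal (Gdist (f y) (f x) / dist y x))"
      unfolding Lip_def
      by (rule Limsup_mono, rule eventually_mono[OF evU])
        (use keyg in \<open>auto intro: divide_right_mono\<close>)
    also have "\<dots> \<le> Lip f Gdist \<Omega> x" unfolding Lip_def
      by (rule Limsup_filter_mono, rule at_le[OF UO])
    finally show ?thesis .
  qed
  have Lh: "Lip h Gdist U x \<le> Lip f Gdist \<Omega> x"
  proof -
    have "Lip h Gdist U x \<le> Limsup (at x within U) (\<lambda>y. ereal (Gdist (f y) (f x) / dist y x))"
      unfolding Lip_def
      by (rule Limsup_mono, rule eventually_mono[OF evU])
        (use keyh in \<open>auto intro: divide_right_mono\<close>)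
    also have "\<dots> \<le> Lip f Gdist \<Omega> x" unfolding Lip_def
      by (rule Limsup_filter_mono, rule at_le[OF UO])
    finally show ?thesis .
  qed
  show ?thesis using Rpos Spos QRS oU xU UO parts Lg Lh by blast
qed

end
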